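(* Let $G$ be a group and let $A$ and $B$ be torsion-free abelian subgroups of $G$ such that each of $A$ and $B$ has finite index in $G$, is normal in $G$, and is a maximal abelian subgroup of $G$. Then $A=B$.
   Context: A subgroup is maximal abelian if it is abelian and is not properly contained in any abelian subgroup of $G$. *)

theory Defs
  imports "HOL-Algebra.Algebra"
begin

definition abelian_subgroup :: "'a set \<Rightarrow> ('a, 'b) monoid_scheme \<Rightarrow> bool" where
  "abelian_subgroup H G \<longleftrightarrow> subgroup H G \<and>
     (\<forall>x\<in>H. \<forall>y\<in>H. x \<otimes>\<^bsub>G\<^esub> y = y \<otimes>\<^bsub>G\<^esub> x)"

definition maximal_abelian_subgroup :: "'a set \<Rightarrow> ('a, 'b) monoid_scheme \<Rightarrow> bool" where
  "maximal_abelian_subgroup H G \<longleftrightarrow> abelian_subgroup H G \<and>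
     (\<forall>K. abelian_subgroup K G \<and> H \<subseteq> K \<longrightarrow> K = H)"

definition torsion_free_subgroup :: "'a set \<Rightarrow> ('a, 'b) monoid_scheme \<Rightarrow> bool" where
  "torsion_free_subgroup H G \<longleftrightarrow> subgroup H G \<and>
     (\<forall>x\<in>H. \<forall>n::nat. n > 0 \<and> x [^]\<^bsub>G\<^esub> n = \<one>\<^bsub>G\<^esub> \<longrightarrow> x = \<one>\<^bsub>G\<^esub>)"

definition finite_index :: "'a set \<Rightarrow> ('a, 'b) monoid_scheme \<Rightarrow> bool" where
  "finite_index H G \<longleftrightarrow> finite (rcosets\<^bsub>G\<^esub> H)"

end

theory Submission
  imports Defs
begin

lemma (in group) pow_in_fin_index:
  assumes "subgroup B G" "finite (rcosets B)" "a \<in> carrier G"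
  shows "\<exists>k>0. a [^] (k::nat) \<in> B"
proof -
  define f where "f = (\<lambda>i::nat. B #> a [^] i)"
  have "range f \<subseteq> rcosets B" unfolding f_def
    using assms by (auto intro!: rcosetsI subgroup.subset)
  hence "finite (range f)" using assms(2) finite_subset by blast
  hence "\<not> inj f" using finite_imageD infinite_UNIV_nat by blast
  then obtain i j where ij: "i \<noteq> j" "f i = f j" unfolding inj_def by blast
  have key: "\<And>i j. i < j \<Longrightarrow> f i = f j \<Longrightarrow> a [^] (j - i) \<in> B"
  proof -
    fix i j :: nat assume lt: "i < j" and eq: "f i = f j"
    have "a [^] j \<in> B #> a [^] i"
      using repr_independenceD[OF assms(1), of "a [^] j" "a [^] i"] eq assms(3)
      unfolding f_def by auto
    hence "a [^] j \<otimes> inv (a [^] i) \<in> B"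
      using subgroup.rcos_module_imp[OF assms(1) is_group] assms(3) by auto
    moreover have "a [^] j = a [^] (j - i) \<otimes> a [^] i"
      using nat_pow_mult[OF assms(3), of "j - i" i] lt by simp
    ultimately show "a [^] (j - i) \<in> B"
      using assms(3) by (simp add: m_assoc)
  qed
  show ?thesis
  proof (cases "i < j")
    case True thus ?thesis using key ij by (intro exI[of _ "j - i"]) auto
  next
    case False hence "j < i" using ij by auto
    thus ?thesis using key ij by (intro exI[of _ "i - j"]) auto
  qed
qed

lemma (in group) conj_pow:
  assumes "a \<in> carrier G" "b \<in> carrier G"
  shows "(b \<otimes> a \<otimes> inv b) [^] (k::nat) = b \<otimes> a [^] k \<otimes> inv b"
proof (induction k)
  case 0 thus ?case using assms by simp
next
  case (Suc k)
  have "(b \<otimes> a \<otimes> inv b) [^] Suc k = (b \<otimes> a [^] k \<otimes> inv b) \<otimes> (b \<otimes> a \<otimes> inv b)"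
    using Suc by simp
  also have "\<dots> = b \<otimes> (a [^] k \<otimes> a) \<otimes> inv b"
  proof -
    have "inv b \<otimes> (b \<otimes> (a \<otimes> inv b)) = a \<otimes> inv b"
      using assms by (simp add: m_assoc[symmetric])
    thus ?thesis using assms by (simp add: m_assoc)
  qed
  finally show ?case by simp
qed

lemma (in group) commute_lemma:
  assumes A: "torsion_free_subgroup A G" "A \<lhd> G" "abelian_subgroup A G"
    and B: "abelian_subgroup B G" "finite (rcosets A)" "finite (rcosets B)"
    and a: "a \<in> A" and b: "b \<in> B"
  shows "b \<otimes> a = a \<otimes> b"
proof -
  have sA: "subgroup A G"
    using A(3) unfolding Defs.abelian_subgroup_def by (rule conjunct1)
  have sB: "subgroup B G"
    using B(1) unfolding Defs.abelian_subgroup_def by (rule conjunct1)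
  have ac: "a \<in> carrier G" by (rule subgroup.mem_carrier[OF sA a])
  have bc: "b \<in> carrier G" by (rule subgroup.mem_carrier[OF sB b])
  obtain k where k: "k > 0" "a [^] (k::nat) \<in> B"
    using pow_in_fin_index[OF sB B(3) ac] by blast
  define c where "c = b \<otimes> a \<otimes> inv b"
  have cA: "c \<in> A" unfolding c_def using normal.inv_op_closed2[OF A(2) bc a] .
  have cc: "c \<in> carrier G" by (rule subgroup.mem_carrier[OF sA cA])
  have "c [^] k = b \<otimes> a [^] k \<otimes> inv b" unfolding c_def using conj_pow[OF ac bc] by simp
  also have "\<dots> = a [^] k \<otimes> b \<otimes> inv b"
  proof -
    have "b \<otimes> a [^] k = a [^] k \<otimes> b"
      using B(1) k(2) b unfolding Defs.abelian_subgroup_def by blast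
    thus ?thesis by simp
  qed
  also have "\<dots> = a [^] k" using ac bc by (simp add: m_assoc)
  finally have ck: "c [^] k = a [^] k" .
  have iaA: "inv a \<in> A" by (rule subgroup.m_inv_closed[OF sA a])
  have comm: "c \<otimes> inv a = inv a \<otimes> c"
    using A(3) cA iaA unfolding Defs.abelian_subgroup_def by blast
  have "(c \<otimes> inv a) [^] k = c [^] k \<otimes> (inv a) [^] k"
    using pow_mult_distrib[OF comm cc] ac by simp
  also have "\<dots> = \<one>" using ck ac by (simp add: nat_pow_inv)
  finally have "(c \<otimes> inv a) [^] k = \<one>" .
  moreover have "c \<otimes> inv a \<in> A" by (rule subgroup.m_closed[OF sA cA iaA])
  ultimately have "c \<otimes> inv a = \<one>"
    using A(1) k(1) unfolding torsion_free_subgroup_def by (meson conjunct2 bspec)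
  hence "c = a"
  proof -
    assume h: "c \<otimes> inv a = \<one>"
    have "c = c \<otimes> inv a \<otimes> a" using cc ac by (simp add: m_assoc)
    also have "\<dots> = a" using h ac by simp
    finally show ?thesis .
  qed
  hence "b \<otimes> a \<otimes> inv b \<otimes> b = a \<otimes> b" unfolding c_def by simp
  thus ?thesis using ac bc by (simp add: m_assoc)
qed

lemma (in group) incl:
  assumes A: "torsion_free_subgroup A G" "A \<lhd> G" "maximal_abelian_subgroup A G"
    and B: "B \<lhd> G" "abelian_subgroup B G" "finite (rcosets A)" "finite (rcosets B)"
  shows "B \<subseteq> A"
proof -
  have aA: "abelian_subgroup A G" using A(3) unfolding Defs.maximal_abelian_subgroup_def by blast
  have sA: "subgroup A G"
    using aA unfolding Defs.abelian_subgroup_def by (rule conjunct1)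
  have sB: "subgroup B G"
    using B(2) unfolding Defs.abelian_subgroup_def by (rule conjunct1)
  have cm: "\<And>a b. a \<in> A \<Longrightarrow> b \<in> B \<Longrightarrow> b \<otimes> a = a \<otimes> b"
    using commute_lemma[OF A(1,2) aA B(2,3,4)] by blast
  have cA: "\<And>x y. x \<in> A \<Longrightarrow> y \<in> A \<Longrightarrow> x \<otimes> y = y \<otimes> x"
    using aA unfolding Defs.abelian_subgroup_def by blast
  have cB: "\<And>x y. x \<in> B \<Longrightarrow> y \<in> B \<Longrightarrow> x \<otimes> y = y \<otimes> x"
    using B(2) unfolding Defs.abelian_subgroup_def by blast
  have carA: "\<And>x. x \<in> A \<Longrightarrow> x \<in> carrier G" by (rule subgroup.mem_carrier[OF sA])
  have carB: "\<And>x. x \<in> B \<Longrightarrow> x \<in> carrier G" by (rule subgroup.mem_carrier[OF sB])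
  have sAB: "subgroup (A <#> B) G"
    using normal_subgroup_set_mult_closed[OF A(2) B(1)] normal_imp_subgroup by blast
  have "abelian_subgroup (A <#> B) G"
    unfolding Defs.abelian_subgroup_def
  proof (intro conjI sAB ballI)
    fix x y assume "x \<in> A <#> B" "y \<in> A <#> B"
    then obtain a1 b1 a2 b2 where h: "a1 \<in> A" "b1 \<in> B" "a2 \<in> A" "b2 \<in> B"
      "x = a1 \<otimes> b1" "y = a2 \<otimes> b2" unfolding set_mult_def by blast
    have "x \<otimes> y = a1 \<otimes> (b1 \<otimes> a2) \<otimes> b2" using h carA carB by (simp add: m_assoc)
    also have "\<dots> = a1 \<otimes> (a2 \<otimes> b1) \<otimes> b2" using cm h by simp
    also have "\<dots> = (a1 \<otimes> a2) \<otimes> (b1 \<otimes> b2)" using h carA carB by (simp add: m_assoc)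
    also have "\<dots> = (a2 \<otimes> a1) \<otimes> (b2 \<otimes> b1)" using h cA cB by simp
    also have "\<dots> = a2 \<otimes> (a1 \<otimes> b2) \<otimes> b1" using h carA carB by (simp add: m_assoc)
    also have "\<dots> = a2 \<otimes> (b2 \<otimes> a1) \<otimes> b1" using cm h by simp
    also have "\<dots> = y \<otimes> x" using h carA carB by (simp add: m_assoc)
    finally show "x \<otimes> y = y \<otimes> x" .
  qed
  moreover have "A \<subseteq> A <#> B"
  proof
    fix a assume "a \<in> A"
    hence "a = a \<otimes> \<one>" using carA by simp
    thus "a \<in> A <#> B" using \<open>a \<in> A\<close> subgroup.one_closed[OF sB] unfolding set_mult_def by blast
  qed
  ultimately have eq: "A <#> B = A" using A(3) unfolding Defs.maximal_abelian_subgroup_def by blast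
  show "B \<subseteq> A"
  proof
    fix b assume "b \<in> B"
    hence "b = \<one> \<otimes> b" using carB by simp
    hence "b \<in> A <#> B" using \<open>b \<in> B\<close> subgroup.one_closed[OF sA] unfolding set_mult_def by blast
    thus "b \<in> A" using eq by simp
  qed
qed

theorem mainTheorem1:
  fixes G (structure) and A B :: "'a set"
  assumes "group G"
    and "torsion_free_subgroup A G" and "torsion_free_subgroup B G"
    and "finite_index A G" and "finite_index B G"
    and "A \<lhd> G" and "B \<lhd> G"
    and "maximal_abelian_subgroup A G" and "maximal_abelian_subgroup B G"
  shows "A = B"
proof -
  have aA: "abelian_subgroup A G" "abelian_subgroup B G"
    using assms(8,9) unfolding Defs.maximal_abelian_subgroup_def by auto
  have fA: "finite (rcosets A)" "finite (rcosets B)" using assms(4,5) unfolding finite_index_def by auto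
  show ?thesis
    using group.incl[OF assms(1) assms(2,6,8) assms(7) aA(2) fA]
      group.incl[OF assms(1) assms(3,7,9) assms(6) aA(1) fA(2) fA(1)] by blast
qed

end
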